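(* Let $\Sigma$ be a non-empty finite or countably infinite alphabet, $p$ a positive Bernoulli distribution on $\Sigma$, and $A=(Q,\Sigma,\delta,q_s,F)$ a strongly connected DFA with $F\neq\emptyset$. Then there exists a real number $c>0$ such that for every $\epsilon>0$, $\lim_{n\to\infty}\mu_p(E_n(c-\epsilon))=0$.
   Context: $p:\Sigma\to(0,1]$ with $\sum_ap(a)=1$; $\mu_p(a_1\cdots a_n)=\prod_ip(a_i)$ and for $W\subseteq\Sigma^*$, $\mu_p(W)=\sum_{w\in W}\mu_p(w)$. For $q\in Q$, $A_q$ denotes the DFA $A$ with start state $q$, and for a word $w=w_1\cdots w_n$, $A_q[w]$ is the subsequence of those $w_i$ with $\delta^*(q,w_1\cdots w_{i-1})\in F$. For real $b$ and $n\ge1$: $E_n(b,q)=\{w\in\Sigma^n: |A_q[w]|\le bn\}$ and $E_n(b)=\bigcup_{q\in Q}E_n(b,q)$. $A$ is strongly connected if its underlying directed graph (edges $q\to\delta(q,a)$) is strongly connected. *)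

theory Defs
  imports "HOL-Analysis.Analysis"
begin

definition dfa :: "'q set \<Rightarrow> 'a set \<Rightarrow> ('q \<Rightarrow> 'a \<Rightarrow> 'q) \<Rightarrow> 'q \<Rightarrow> 'q set \<Rightarrow> bool" where
  "dfa Q Sig delta qs F \<longleftrightarrow> finite Q \<and> qs \<in> Q \<and> F \<subseteq> Q \<and>
     (\<forall>q\<in>Q. \<forall>a\<in>Sig. delta q a \<in> Q)"

fun delta_star :: "('q \<Rightarrow> 'a \<Rightarrow> 'q) \<Rightarrow> 'q \<Rightarrow> 'a list \<Rightarrow> 'q" where
  "delta_star delta q [] = q"
| "delta_star delta q (a # w) = delta_star delta (delta q a) w"

definition strongly_connected :: "'q set \<Rightarrow> 'a set \<Rightarrow> ('q \<Rightarrow> 'a \<Rightarrow> 'q) \<Rightarrow> bool" where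
  "strongly_connected Q Sig delta \<longleftrightarrow>
     (\<forall>q\<in>Q. \<forall>q'\<in>Q. (q, q') \<in> (Restr {(x, delta x a) | x a. x \<in> Q \<and> a \<in> Sig} Q)\<^sup>*)"

text \<open>A_q[w]: subsequence of letters w_i read while the current state
  delta*(q, w_1...w_(i-1)) lies in F.\<close>
fun run_sub :: "('q \<Rightarrow> 'a \<Rightarrow> 'q) \<Rightarrow> 'q set \<Rightarrow> 'q \<Rightarrow> 'a list \<Rightarrow> 'a list" where
  "run_sub delta F q [] = []"
| "run_sub delta F q (a # w) =
     (if q \<in> F then a # run_sub delta F (delta q a) w else run_sub delta F (delta q a) w)"

definition mu :: "('a \<Rightarrow> real) \<Rightarrow> 'a list set \<Rightarrow> real" where
  "mu p W = infsum (\<lambda>w. prod_list (map p w)) W"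

definition E_q :: "'a set \<Rightarrow> ('q \<Rightarrow> 'a \<Rightarrow> 'q) \<Rightarrow> 'q set \<Rightarrow> nat \<Rightarrow> real \<Rightarrow> 'q \<Rightarrow> 'a list set" where
  "E_q Sig delta F n b q =
     {w. set w \<subseteq> Sig \<and> length w = n \<and> real (length (run_sub delta F q w)) \<le> b * real n}"

definition E :: "'q set \<Rightarrow> 'a set \<Rightarrow> ('q \<Rightarrow> 'a \<Rightarrow> 'q) \<Rightarrow> 'q set \<Rightarrow> nat \<Rightarrow> real \<Rightarrow> 'a list set" where
  "E Q Sig delta F n b = (\<Union>q\<in>Q. E_q Sig delta F n b q)"

end

theory Submission
  imports Defs
begin

lemma delta_star_snoc: "delta_star d q (u @ [a]) = d (delta_star d q u) a"
  by (induction u arbitrary: q) auto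

locale dsetting =
  fixes Q :: "'q set" and Sig :: "'a set" and delta :: "'q \<Rightarrow> 'a \<Rightarrow> 'q"
    and F :: "'q set" and p :: "'a \<Rightarrow> real"
  assumes ppos: "\<forall>a\<in>Sig. 0 < p a"
    and psum: "(p has_sum 1) Sig"
    and closed: "\<forall>q\<in>Q. \<forall>a\<in>Sig. delta q a \<in> Q"
    and finQ: "finite Q" and Qne: "Q \<noteq> {}"
begin

definition W :: "nat \<Rightarrow> 'a list set" where
  "W n = {w. set w \<subseteq> Sig \<and> length w = n}"

definition P :: "'a list \<Rightarrow> real" where
  "P w = prod_list (map p w)"

definition V :: "'q \<Rightarrow> 'a list \<Rightarrow> nat" where
  "V q w = length (run_sub delta F q w)"

definition G :: "nat \<Rightarrow> 'q \<Rightarrow> real" where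
  "G n q = infsum (\<lambda>w. P w * (1/2) ^ V q w) (W n)"

lemma P_pos: "set w \<subseteq> Sig \<Longrightarrow> 0 < P w"
  unfolding P_def using ppos by (induction w) auto

lemma p_nn: "a \<in> Sig \<Longrightarrow> 0 \<le> p a"
  using ppos by (simp add: order.strict_implies_order)

lemma P_nn: "w \<in> W n \<Longrightarrow> 0 \<le> P w"
  using P_pos by (simp add: W_def order.strict_implies_order)

lemma P_Cons[simp]: "P (a # w) = p a * P w"
  by (simp add: P_def)

lemma P_Nil[simp]: "P [] = 1"
  by (simp add: P_def)

lemma V_Cons: "V q (a # w) = (if q \<in> F then 1 else 0) + V (delta q a) w"
  by (simp add: V_def)

lemma W_0: "W 0 = {[]}"
  by (auto simp: W_def)

lemma W_Suc: "W (Suc n) = (\<lambda>(a,w). a # w) ` (Sig \<times> W n)"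
proof -
  have "x \<in> (\<lambda>(a,w). a # w) ` (Sig \<times> W n)" if "x \<in> W (Suc n)" for x
    using that by (cases x) (auto simp: W_def)
  then show ?thesis by (auto simp: W_def)
qed

lemma inj_cons: "inj_on (\<lambda>(a,w). a # w) X"
  by (auto simp: inj_on_def)

lemma p_summable: "p summable_on Sig"
  using psum by (auto simp: summable_on_def)

lemma p_infsum: "infsum p Sig = 1"
  using psum by (simp add: infsumI)

lemma hasW: "(P has_sum 1) (W n)"
proof (induction n)
  case 0
  have "(P has_sum sum P {[]}) {[]}" by (rule has_sum_finite) (rule finite.insertI, rule finite.emptyI)
  moreover have "sum P {[]} = 1" by simp
  ultimately show ?case unfolding W_0 by simp
next
  case (Suc n)
  have h1: "\<And>a. a \<in> Sig \<Longrightarrow> ((\<lambda>w. (\<lambda>(a,w). p a * P w) (a, w)) has_sum p a) (W n)"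
    using has_sum_cmult_right[OF Suc.IH] by simp
  have sm: "(\<lambda>(a,w). p a * P w) summable_on Sig \<times> W n"
    apply (rule summable_on_SigmaI[OF h1 p_summable])
    by (auto intro!: mult_nonneg_nonneg p_nn P_nn)
  have "((\<lambda>(a,w). p a * P w) has_sum 1) (Sig \<times> W n)"
    by (rule has_sum_SigmaI[OF h1 psum sm])
  then have "((P \<circ> (\<lambda>(a,w). a # w)) has_sum 1) (Sig \<times> W n)"
  proof -
    have "(P \<circ> (\<lambda>(a,w). a # w)) = (\<lambda>(a,w). p a * P w)" by (auto simp: fun_eq_iff)
    then show ?thesis using \<open>((\<lambda>(a,w). p a * P w) has_sum 1) (Sig \<times> W n)\<close> by simp
  qed
  then show ?case
    by (simp add: W_Suc has_sum_reindex[OF inj_cons])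
qed

lemma P_summable: "P summable_on W n"
  using hasW by (auto simp: summable_on_def)

lemma P_infsum: "infsum P (W n) = 1"
  using hasW by (simp add: infsumI)

lemma bounded_summable:
  assumes "\<And>w. w \<in> W n \<Longrightarrow> 0 \<le> h w \<and> h w \<le> P w"
  shows "h summable_on W n"
  by (rule summable_on_comparison_test[OF P_summable]) (use assms in auto)

lemma decomp:
  assumes "\<And>w. w \<in> W (Suc n) \<Longrightarrow> 0 \<le> h w \<and> h w \<le> P w"
  shows "infsum h (W (Suc n)) = infsum (\<lambda>a. infsum (\<lambda>w. h (a # w)) (W n)) Sig"
proof -
  have "infsum h (W (Suc n)) = infsum (h \<circ> (\<lambda>(a,w). a # w)) (Sig \<times> W n)"
    by (simp add: W_Suc infsum_reindex[OF inj_cons])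
  also have "\<dots> = infsum (\<lambda>a. infsum (\<lambda>w. (h \<circ> (\<lambda>(a,w). a # w)) (a, w)) (W n)) Sig"
  proof (rule infsum_Sigma_banach[symmetric])
    have "(P \<circ> (\<lambda>(a,w). a # w)) summable_on Sig \<times> W n"
      using hasW[of "Suc n"] by (auto simp: W_Suc has_sum_reindex[OF inj_cons] summable_on_def)
    then show "(h \<circ> (\<lambda>(a,w). a # w)) summable_on Sig \<times> W n"
      by (rule summable_on_comparison_test) (use assms in \<open>auto simp: W_Suc\<close>)
  qed
  finally show ?thesis by simp
qed

lemma integrand_bounds:
  assumes "w \<in> W n"
  shows "0 \<le> P w * (1/2) ^ V q w \<and> P w * (1/2) ^ V q w \<le> P w"
proof -
  have "0 < P w" using assms P_pos by (auto simp: W_def)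
  moreover have "(1/2::real) ^ V q w \<le> 1" by (simp add: power_le_one)
  moreover have "0 \<le> (1/2::real) ^ V q w" by simp
  ultimately show ?thesis using mult_left_le[of "(1/2::real) ^ V q w" "P w"] by simp
qed

lemma integ_nn: "w \<in> W n \<Longrightarrow> 0 \<le> P w * (1/2) ^ V q w"
  using integrand_bounds by blast

lemma integ_le: "w \<in> W n \<Longrightarrow> P w * (1/2) ^ V q w \<le> P w"
  using integrand_bounds by blast

lemma G_summable: "(\<lambda>w. P w * (1/2) ^ V q w) summable_on W n"
  by (rule bounded_summable) (rule integrand_bounds)

lemma G_nonneg: "0 \<le> G n q"
  unfolding G_def by (rule infsum_nonneg) (erule integ_nn)

lemma G_le1: "G n q \<le> 1"
proof -
  have "G n q \<le> infsum P (W n)"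
    unfolding G_def by (rule infsum_mono[OF G_summable P_summable]) (erule integ_le)
  then show ?thesis by (simp add: P_infsum)
qed

lemma G_0: "G 0 q = 1"
  by (simp add: G_def W_0 V_def)

definition cf :: "'q \<Rightarrow> real" where
  "cf q = (if q \<in> F then 1/2 else 1)"

lemma cf_bounds: "0 < cf q" "cf q \<le> 1"
  by (auto simp: cf_def)

lemma G_Suc: "G (Suc n) q = infsum (\<lambda>a. p a * (cf q * G n (delta q a))) Sig"
proof -
  have "G (Suc n) q = infsum (\<lambda>a. infsum (\<lambda>w. P (a # w) * (1/2) ^ V q (a # w)) (W n)) Sig"
    unfolding G_def by (rule decomp) (rule integrand_bounds)
  also have "\<dots> = infsum (\<lambda>a. p a * (cf q * G n (delta q a))) Sig"
  proof (rule infsum_cong)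
    fix a assume "a \<in> Sig"
    have "infsum (\<lambda>w. P (a # w) * (1/2) ^ V q (a # w)) (W n)
        = infsum (\<lambda>w. (p a * cf q) * (P w * (1/2) ^ V (delta q a) w)) (W n)"
      by (rule infsum_cong) (simp add: V_Cons cf_def power_add)
    also have "\<dots> = (p a * cf q) * G n (delta q a)"
      unfolding G_def by (rule infsum_cmult_right) (rule G_summable)
    finally show "infsum (\<lambda>w. P (a # w) * (1/2) ^ V q (a # w)) (W n) = p a * (cf q * G n (delta q a))"
      by simp
  qed
  finally show ?thesis .
qed

lemma sig_summable:
  assumes "\<And>a. a \<in> Sig \<Longrightarrow> 0 \<le> g a \<and> g a \<le> 1"
  shows "(\<lambda>a. p a * g a) summable_on Sig"
  by (rule summable_on_comparison_test[OF p_summable])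
     (use assms p_nn in \<open>auto intro: mult_left_le\<close>)

definition H :: "nat \<Rightarrow> real" where
  "H n = Max ((\<lambda>q. G n q) ` Q)"

lemma G_le_H: "q \<in> Q \<Longrightarrow> G n q \<le> H n"
  unfolding H_def using finQ by (auto intro: Max_ge)

lemma H_attained: "\<exists>q\<in>Q. H n = G n q"
  unfolding H_def using finQ Qne by (metis (no_types, lifting) Max_in finite_imageI image_iff image_is_empty)

lemma H_bounds: "0 \<le> H n" "H n \<le> 1"
  using H_attained[of n] G_nonneg G_le1 by metis+

lemma cfG_nn: "0 \<le> cf q * G n q'"
  using cf_bounds[of q] G_nonneg[of n q'] by simp

lemma cfG_le: "cf q * G n q' \<le> G n q'"
  using cf_bounds[of q] G_nonneg[of n q'] mult_right_mono[of "cf q" 1 "G n q'"] by simp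

lemma cfG_le1: "cf q * G n q' \<le> 1"
  using cfG_le G_le1 order_trans by blast

lemma submult: "q \<in> Q \<Longrightarrow> G (j + n) q \<le> G j q * H n"
proof (induction j arbitrary: q)
  case 0
  then show ?case by (simp add: G_0 G_le_H)
next
  case (Suc j)
  have "G (Suc j + n) q = infsum (\<lambda>a. p a * (cf q * G (j + n) (delta q a))) Sig"
    by (simp add: G_Suc)
  also have "\<dots> \<le> infsum (\<lambda>a. p a * (cf q * G j (delta q a)) * H n) Sig"
  proof (rule infsum_mono)
    show "(\<lambda>a. p a * (cf q * G (j + n) (delta q a))) summable_on Sig"
      by (rule sig_summable) (simp add: cfG_nn cfG_le1)
    show "(\<lambda>a. p a * (cf q * G j (delta q a)) * H n) summable_on Sig"
      unfolding mult.assoc[symmetric]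
      by (rule summable_on_cmult_left, unfold mult.assoc, rule sig_summable)
         (simp add: cfG_nn cfG_le1)
    fix a assume a: "a \<in> Sig"
    have "delta q a \<in> Q" using closed Suc.prems a by blast
    then have ih: "G (j + n) (delta q a) \<le> G j (delta q a) * H n" by (rule Suc.IH)
    show "p a * (cf q * G (j + n) (delta q a)) \<le> p a * (cf q * G j (delta q a)) * H n"
    proof -
      have "cf q * G (j + n) (delta q a) \<le> cf q * (G j (delta q a) * H n)"
        using cf_bounds[of q] ih by (auto intro!: mult_left_mono)
      then have "p a * (cf q * G (j + n) (delta q a)) \<le> p a * (cf q * (G j (delta q a) * H n))"
        using p_nn[OF a] by (rule mult_left_mono)
      then show ?thesis by (simp add: mult.assoc)
    qed
  qed
  also have "\<dots> = G (Suc j) q * H n"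
    by (simp add: G_Suc infsum_cmult_left')
  finally show ?case .
qed

lemma G_Suc_le: "G (Suc n) q \<le> infsum (\<lambda>a. p a * G n (delta q a)) Sig"
  unfolding G_Suc
  by (rule infsum_mono; (rule sig_summable)?)
     (auto simp: G_nonneg G_le1 cfG_nn cfG_le1 intro: mult_left_mono p_nn cfG_le)

lemma pG_le: "a \<in> Sig \<Longrightarrow> p a * G n q' \<le> p a"
proof -
  assume a: "a \<in> Sig"
  have "p a * G n q' \<le> p a * 1" by (rule mult_left_mono[OF G_le1 p_nn[OF a]])
  then show ?thesis by simp
qed

lemma pG_half: "a \<in> Sig \<Longrightarrow> p a * (1/2 * G n q') \<le> p a * (1/2)"
proof -
  assume a: "a \<in> Sig"
  have "1/2 * G n q' \<le> 1/2" using G_le1[of n q'] by simp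
  then show ?thesis by (rule mult_left_mono[OF _ p_nn[OF a]])
qed

lemma hit:
  assumes "q \<in> Q" "set u \<subseteq> Sig" "delta_star delta q u \<in> F" "length u < j"
  shows "G j q \<le> 1 - P u / 2"
  using assms
proof (induction u arbitrary: q j)
  case Nil
  then obtain j' where j: "j = Suc j'" by (cases j) auto
  have "G j q = infsum (\<lambda>a. p a * (1/2 * G j' (delta q a))) Sig"
    using Nil by (simp add: j G_Suc cf_def)
  also have "\<dots> \<le> infsum (\<lambda>a. p a * (1/2)) Sig"
    by (rule infsum_mono; (rule sig_summable)?)
       (auto simp: G_nonneg G_le1 pG_half pG_le order_trans[OF G_le1])
  also have "\<dots> = infsum p Sig * (1/2)"
    by (rule infsum_cmult_left) (rule p_summable)
  also have "\<dots> = 1/2" by (simp add: p_infsum)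
  finally show ?case by simp
next
  case (Cons a u)
  then obtain j' where j: "j = Suc j'" by (cases j) auto
  have a: "a \<in> Sig" using Cons by auto
  have qa: "delta q a \<in> Q" using closed Cons a by blast
  have IH: "G j' (delta q a) \<le> 1 - P u / 2"
    using Cons qa j by auto
  let ?f = "\<lambda>b. p b * G j' (delta q b)"
  have fs: "?f summable_on Sig"
    by (rule sig_summable) (use G_nonneg G_le1 in auto)
  have Sig_eq: "Sig = insert a (Sig - {a})" using a by auto
  have "G j q \<le> infsum ?f Sig" unfolding j by (rule G_Suc_le)
  also have "infsum ?f Sig = ?f a + infsum ?f (Sig - {a})"
    by (subst Sig_eq, rule infsum_insert) (auto intro: summable_on_subset[OF fs])
  also have "infsum ?f (Sig - {a}) \<le> infsum p (Sig - {a})"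
    by (rule infsum_mono) (auto intro: summable_on_subset[OF fs] summable_on_subset[OF p_summable] pG_le)
  also have "infsum p (Sig - {a}) = 1 - p a"
  proof -
    have "infsum p Sig = p a + infsum p (Sig - {a})"
      by (subst Sig_eq, rule infsum_insert) (auto intro: summable_on_subset[OF p_summable])
    then show ?thesis using p_infsum by simp
  qed
  also have "?f a \<le> p a * (1 - P u / 2)"
    using IH p_nn[OF a] by (simp add: mult_left_mono)
  finally show ?case by (simp add: algebra_simps)
qed

lemma H_mult: "H (j + n) \<le> H j * H n"
proof -
  obtain q where q: "q \<in> Q" "H (j + n) = G (j + n) q" using H_attained by blast
  have "G (j + n) q \<le> G j q * H n" by (rule submult[OF q(1)])
  also have "\<dots> \<le> H j * H n" using G_le_H[OF q(1)] H_bounds by (simp add: mult_right_mono)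
  finally show ?thesis using q by simp
qed

lemma H_pow: "H (k * m + r) \<le> H k ^ m"
proof (induction m)
  case 0
  then show ?case using H_bounds by simp
next
  case (Suc m)
  have "H (k * Suc m + r) = H (k + (k * m + r))" by (simp add: algebra_simps)
  also have "\<dots> \<le> H k * H (k * m + r)" by (rule H_mult)
  also have "\<dots> \<le> H k * H k ^ m" using Suc H_bounds by (simp add: mult_left_mono)
  finally show ?case by simp
qed

lemma exists_k:
  assumes sc: "strongly_connected Q Sig delta" and FQ: "F \<subseteq> Q" and Fne: "F \<noteq> {}"
  shows "\<exists>k. H k < 1"
proof -
  obtain f where f: "f \<in> F" using Fne by blast
  have "\<exists>u. set u \<subseteq> Sig \<and> delta_star delta q u \<in> F" if q: "q \<in> Q" for q
  proof -
    have "(q, f) \<in> (Restr {(x, delta x a) | x a. x \<in> Q \<and> a \<in> Sig} Q)\<^sup>*"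
      using sc q f FQ unfolding strongly_connected_def by blast
    then have "\<exists>u. set u \<subseteq> Sig \<and> delta_star delta q u = f"
    proof (induction rule: rtrancl_induct)
      case base
      then show ?case by (intro exI[of _ "[]"]) simp
    next
      case (step y z)
      then obtain u b where "set u \<subseteq> Sig" "delta_star delta q u = y" "b \<in> Sig" "z = delta y b"
        by blast
      then show ?case by (intro exI[of _ "u @ [b]"]) (simp add: delta_star_snoc)
    qed
    then show ?thesis using f by blast
  qed
  then obtain u where u: "\<And>q. q \<in> Q \<Longrightarrow> set (u q) \<subseteq> Sig \<and> delta_star delta q (u q) \<in> F"
    by metis
  define k where "k = Suc (Max ((\<lambda>q. length (u q)) ` Q))"
  have "G k q < 1" if q: "q \<in> Q" for q
  proof -
    have "length (u q) < k" unfolding k_def using finQ q by (simp add: le_imp_less_Suc)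
    then have "G k q \<le> 1 - P (u q) / 2" using hit q u by blast
    moreover have "0 < P (u q)" using P_pos u q by blast
    ultimately show ?thesis by simp
  qed
  then have "H k < 1" using H_attained[of k] by metis
  then show ?thesis by blast
qed

lemma mu_eq: "mu p X = infsum P X"
  unfolding mu_def P_def by simp

lemma markov: "mu p (E_q Sig delta F n b q) \<le> 2 powr (b * n) * G n q"
proof -
  define X where "X = E_q Sig delta F n b q"
  have XW: "X \<subseteq> W n" by (auto simp: X_def E_q_def W_def)
  let ?g = "\<lambda>w. 2 powr (b * n) * (P w * (1/2) ^ V q w)"
  have gs: "?g summable_on W n" by (rule summable_on_cmult_right) (rule G_summable)
  have "mu p X = infsum P X" by (rule mu_eq)
  also have "\<dots> \<le> infsum ?g X"
  proof (rule infsum_mono)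
    show "P summable_on X" using P_summable XW summable_on_subset by blast
    show "?g summable_on X" using gs XW summable_on_subset by blast
    fix w assume w: "w \<in> X"
    then have Vle: "real (V q w) \<le> b * n" by (simp add: X_def E_q_def V_def)
    have "(1/2::real) ^ V q w = 1 / 2 powr (real (V q w))"
      by (simp add: powr_realpow power_one_over)
    then have "2 powr (b * n) * (1/2) ^ V q w = 2 powr (b * n - real (V q w))"
      by (simp add: powr_diff)
    also have "\<dots> \<ge> 1" using Vle by (intro ge_one_powr_ge_zero) auto
    finally have "1 \<le> 2 powr (b * n) * (1/2) ^ V q w" .
    moreover have "0 < P w" using w XW P_pos by (auto simp: W_def)
    ultimately show "P w \<le> ?g w"
      using mult_left_mono[of 1 "2 powr (b * n) * (1/2) ^ V q w" "P w"] by (simp add: algebra_simps)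
  qed
  also have "\<dots> \<le> infsum ?g (W n)"
    by (rule infsum_mono_neutral) (use gs XW summable_on_subset integrand_bounds in auto)
  also have "\<dots> = 2 powr (b * n) * G n q"
    unfolding G_def by (rule infsum_cmult_right) (rule G_summable)
  finally show ?thesis by (simp add: X_def)
qed

lemma union_bound:
  assumes "finite A" "\<And>q. q \<in> A \<Longrightarrow> X q \<subseteq> W n"
  shows "infsum P (\<Union>q\<in>A. X q) \<le> (\<Sum>q\<in>A. infsum P (X q))"
  using assms
proof (induction A rule: finite_induct)
  case empty
  then show ?case by simp
next
  case (insert x A)
  define B where "B = (\<Union>q\<in>A. X q)"
  have BW: "B \<subseteq> W n" using insert by (auto simp: B_def)
  have XW: "X x \<subseteq> W n" using insert by auto
  have "infsum P (\<Union>q\<in>insert x A. X q) = infsum P (X x \<union> (B - X x))"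
    by (simp add: B_def Un_Diff_cancel)
  also have "\<dots> = infsum P (X x) + infsum P (B - X x)"
    by (rule infsum_Un_disjoint) (use XW BW in \<open>auto intro!: summable_on_subset[OF P_summable[of n]]\<close>)
  also have "infsum P (B - X x) \<le> infsum P B"
    by (rule infsum_mono_neutral) (use BW P_nn in \<open>auto intro!: summable_on_subset[OF P_summable[of n]]\<close>)
  also have "infsum P B \<le> (\<Sum>q\<in>A. infsum P (X q))"
    unfolding B_def using insert by auto
  finally show ?case using insert by simp
qed

lemma main:
  assumes sc: "strongly_connected Q Sig delta" and FQ: "F \<subseteq> Q" and Fne: "F \<noteq> {}"
  shows "\<exists>c>0. \<forall>\<epsilon>>0. (\<lambda>n. mu p (E Q Sig delta F n (c - \<epsilon>))) \<longlonglongrightarrow> 0"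
proof -
  obtain k where k: "H k < 1" using exists_k[OF sc FQ Fne] by blast
  have k0: "0 < k"
  proof (rule ccontr)
    assume "\<not> 0 < k"
    then have "k = 0" by simp
    moreover obtain q where "H 0 = G 0 q" using H_attained by blast
    ultimately show False using k by (simp add: G_0)
  qed
  define \<beta> where "\<beta> = max (H k) (1/2)"
  have b0: "0 < \<beta>" and b1: "\<beta> < 1" and bH: "H k \<le> \<beta>"
    using k by (auto simp: \<beta>_def)
  define c where "c = - log 2 \<beta> / k"
  have lg: "log 2 \<beta> < 0" using b0 b1 by simp
  have c0: "c > 0" unfolding c_def using lg k0 by (intro divide_pos_pos) auto
  have lgc: "log 2 \<beta> = - c * k" unfolding c_def using k0 by simp
  have Gb: "G n q \<le> \<beta> ^ (n div k)" if q: "q \<in> Q" for n q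
  proof -
    have "G n q \<le> H n" by (rule G_le_H[OF q])
    also have "H n = H (k * (n div k) + n mod k)" by simp
    also have "\<dots> \<le> H k ^ (n div k)" by (rule H_pow)
    also have "\<dots> \<le> \<beta> ^ (n div k)" using bH H_bounds by (simp add: power_mono)
    finally show ?thesis .
  qed
  have bpow: "\<beta> ^ m = 2 powr (- c * k * m)" for m :: nat
  proof -
    have "\<beta> = 2 powr (log 2 \<beta>)" using b0 by simp
    then have "\<beta> ^ m = (2 powr (log 2 \<beta>)) powr (real m)"
      by (metis b0 powr_realpow)
    also have "\<dots> = 2 powr (- c * k * m)" by (simp add: powr_powr lgc)
    finally show ?thesis .
  qed
  have Esub: "E Q Sig delta F n b \<subseteq> W n" for n b
    by (auto simp: E_def E_q_def W_def)
  have EqW: "E_q Sig delta F n b q \<subseteq> W n" for n b q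
    by (auto simp: E_q_def W_def)
  show ?thesis
  proof (intro exI[of _ c] conjI allI impI c0)
    fix \<epsilon> :: real assume e: "\<epsilon> > 0"
    define r where "r = 2 powr (- \<epsilon>)"
    have r0: "0 \<le> r" and r1: "r < 1" using e powr_less_cancel_iff[of 2 "-\<epsilon>" 0] by (auto simp: r_def)
    define C where "C = real (card Q) * 2 powr (c * k)"
    have bound: "mu p (E Q Sig delta F n (c - \<epsilon>)) \<le> C * r ^ n" for n
    proof -
      let ?b = "c - \<epsilon>"
      have "mu p (E Q Sig delta F n ?b) = infsum P (\<Union>q\<in>Q. E_q Sig delta F n ?b q)"
        by (simp add: mu_eq E_def)
      also have "\<dots> \<le> (\<Sum>q\<in>Q. infsum P (E_q Sig delta F n ?b q))"
        by (rule union_bound[OF finQ EqW])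
      also have "\<dots> \<le> (\<Sum>q\<in>Q. 2 powr (?b * n) * \<beta> ^ (n div k))"
      proof (rule sum_mono)
        fix q assume q: "q \<in> Q"
        have "infsum P (E_q Sig delta F n ?b q) \<le> 2 powr (?b * n) * G n q"
          using markov[of n ?b q] by (simp add: mu_eq)
        also have "\<dots> \<le> 2 powr (?b * n) * \<beta> ^ (n div k)"
          by (rule mult_left_mono[OF Gb[OF q]]) simp
        finally show "infsum P (E_q Sig delta F n ?b q) \<le> 2 powr (?b * n) * \<beta> ^ (n div k)" .
      qed
      also have "\<dots> = real (card Q) * (2 powr (?b * n) * \<beta> ^ (n div k))" by simp
      also have "2 powr (?b * n) * \<beta> ^ (n div k) \<le> 2 powr (c * k) * r ^ n"
      proof -
        have "2 powr (?b * n) * \<beta> ^ (n div k) = 2 powr (?b * n - c * k * (n div k))"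
          by (simp add: bpow powr_add[symmetric])
        also have "\<dots> \<le> 2 powr (c * k + (- \<epsilon>) * n)"
        proof -
          have "real n < real k * real (n div k) + real k"
          proof -
            have "n < k * (n div k) + k"
              using k0 by (metis add.commute add_less_cancel_left div_mult_mod_eq mod_less_divisor mult.commute)
            then show ?thesis by (metis of_nat_add of_nat_less_iff of_nat_mult)
          qed
          then have "c * real n \<le> c * (real k * real (n div k) + real k)"
            using c0 by (simp add: less_imp_le)
          then have "?b * n - c * k * (n div k) \<le> c * k + (- \<epsilon>) * n"
            by (simp add: algebra_simps)
          then show ?thesis by simp
        qed
        also have "\<dots> = 2 powr (c * k) * r ^ n"
        proof -
          have "r ^ n = r powr (real n)" using r_def by (simp add: powr_realpow)
          also have "\<dots> = 2 powr (- \<epsilon> * n)" by (simp add: r_def powr_powr)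
          finally have "r ^ n = 2 powr (- \<epsilon> * n)" .
          then show ?thesis using powr_add[of 2 "c * k" "- \<epsilon> * n"] by simp
        qed
        finally show ?thesis .
      qed
      then have "real (card Q) * (2 powr (?b * n) * \<beta> ^ (n div k)) \<le> real (card Q) * (2 powr (c * k) * r ^ n)"
        by (rule mult_left_mono) simp
      finally show ?thesis by (simp add: C_def mult.assoc)
    qed
    have nn: "0 \<le> mu p (E Q Sig delta F n (c - \<epsilon>))" for n
      unfolding mu_eq by (rule infsum_nonneg) (use Esub P_nn in blast)
    have lim: "(\<lambda>n. C * r ^ n) \<longlonglongrightarrow> 0"
      using tendsto_mult[OF tendsto_const[of C] LIMSEQ_power_zero[of r]] r0 r1 by simp
    show "(\<lambda>n. mu p (E Q Sig delta F n (c - \<epsilon>))) \<longlonglongrightarrow> 0"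
      by (rule tendsto_sandwich[OF _ _ tendsto_const lim]) (use nn bound in auto)
  qed
qed

end

theorem lemma5p4:
  fixes Q :: "'q set" and Sig :: "'a set" and delta :: "'q \<Rightarrow> 'a \<Rightarrow> 'q"
    and qs :: 'q and F :: "'q set" and p :: "'a \<Rightarrow> real"
  assumes "Sig \<noteq> {}" and "countable Sig"
    and "\<forall>a\<in>Sig. 0 < p a \<and> p a \<le> 1" and "(p has_sum 1) Sig"
    and "dfa Q Sig delta qs F" and "strongly_connected Q Sig delta" and "F \<noteq> {}"
  shows "\<exists>c>0. \<forall>\<epsilon>>0. (\<lambda>n. mu p (E Q Sig delta F n (c - \<epsilon>))) \<longlonglongrightarrow> 0"
proof -
  interpret dsetting Q Sig delta F p
    using assms unfolding dfa_def by unfold_locales auto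
  show ?thesis
    by (rule main) (use assms in \<open>auto simp: dfa_def\<close>)
qed

end
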